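(* Let $X$ and $Y$ be $\mathbb{R}^n$-valued random variables on the same probability space. Suppose $Y$ is centered Gaussian and there are $c_X,C_X>0$ and $m_X\in\mathbb{R}^n$ such that $X$ has a Lebesgue density $p_X$ with $p_X(x)\le C_Xe^{-c_X|x-m_X|^2}$ for all $x\in\mathbb{R}^n$. Then there is $C>0$ such that for each $a\in\mathbb{R}^n$, $$\mathbb{E}\big[e^{-|X-Y-a|^2}\big]\le Ce^{-\frac{c_X}{C}|a-m_X|^2}.$$ *)

theory Defs
  imports "HOL-Probability.Probability"
begin

text \<open>A centered Gaussian random vector (possibly degenerate): every linear
functional of it is either a centered normal random variable with positive
variance or almost surely zero (centered Gaussian with variance 0).\<close>
definition centered_gaussian_vec :: "'s measure \<Rightarrow> ('s \<Rightarrow> 'a::euclidean_space) \<Rightarrow> bool" where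
  "centered_gaussian_vec M Y \<longleftrightarrow>
     Y \<in> borel_measurable M \<and>
     (\<forall>u::'a. (\<exists>\<sigma>>0. distributed M lborel (\<lambda>\<omega>. u \<bullet> Y \<omega>)
                               (\<lambda>x. ennreal (normal_density 0 \<sigma> x)))
             \<or> (AE \<omega> in M. u \<bullet> Y \<omega> = 0))"

end

theory Submission
  imports Defs
begin

lemma nn_integral_normal_density: "\<sigma> > 0 \<Longrightarrow> (\<integral>\<^sup>+x. ennreal (normal_density \<mu> \<sigma> x) \<partial>lborel) = 1"
  by (subst nn_integral_eq_integral) (auto intro: integrable_normal_density)

lemma exp_sq_eq_nd:
  assumes "k > 0"
  shows "exp (- (k * t\<^sup>2)) = sqrt (pi / k) * normal_density 0 (sqrt (1/(2*k))) t"
proof -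
  have "(sqrt (1/(2*k)))\<^sup>2 = 1/(2*k)" using assms by simp
  then show ?thesis using assms
    by (simp add: normal_density_def real_sqrt_divide field_simps)
qed

lemma nn_integral_exp_sq_1d:
  assumes "k > 0"
  shows "(\<integral>\<^sup>+t. ennreal (exp (- (k * t\<^sup>2))) \<partial>lborel) = ennreal (sqrt (pi / k))"
proof -
  have "(\<integral>\<^sup>+t. ennreal (exp (- (k * t\<^sup>2))) \<partial>lborel) =
        (\<integral>\<^sup>+t. ennreal (sqrt (pi / k)) * ennreal (normal_density 0 (sqrt (1/(2*k))) t) \<partial>lborel)"
    by (intro nn_integral_cong, subst exp_sq_eq_nd[OF assms]) (rule ennreal_mult; use assms in simp)
  also have "\<dots> = ennreal (sqrt (pi / k))"
    using assms by (subst nn_integral_cmult) (auto simp: nn_integral_normal_density)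
  finally show ?thesis .
qed

lemma gauss_multi:
  fixes k :: real
  assumes "k > 0"
  shows "(\<integral>\<^sup>+(x::'a::euclidean_space). ennreal (exp (- (k * (norm x)\<^sup>2))) \<partial>lborel) < \<top>"
proof -
  have eq: "ennreal (exp (- (k * (norm x)\<^sup>2))) = (\<Prod>b\<in>Basis. ennreal (exp (- (k * (x \<bullet> b)\<^sup>2))))" for x :: 'a
  proof -
    have "(norm x)\<^sup>2 = (\<Sum>b\<in>Basis. (x \<bullet> b)\<^sup>2)"
    proof -
      have "(norm x)\<^sup>2 = x \<bullet> x" by (simp add: power2_norm_eq_inner)
      also have "\<dots> = (\<Sum>b\<in>Basis. (x \<bullet> b) * (x \<bullet> b))" by (rule euclidean_inner)
      finally show ?thesis by (simp add: power2_eq_square)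
    qed
    then have "exp (- k * (norm x)\<^sup>2) = (\<Prod>b\<in>Basis. exp (- (k * (x \<bullet> b)\<^sup>2)))"
      by (simp add: sum_distrib_left exp_sum)
    then show ?thesis by (simp add: prod_ennreal)
  qed
  have "(\<integral>\<^sup>+(x::'a). ennreal (exp (- (k * (norm x)\<^sup>2))) \<partial>lborel)
      = (\<Prod>b\<in>(Basis::'a set). (\<integral>\<^sup>+t. ennreal (exp (- (k * t\<^sup>2))) \<partial>lborel))"
    unfolding eq by (rule nn_integral_lborel_prod) auto
  also have "\<dots> < \<top>" using assms by (simp add: nn_integral_exp_sq_1d power_less_top_ennreal)
  finally show ?thesis .
qed

lemma nn_integral_lborel_shift:
  fixes m :: "'a::euclidean_space"
  assumes [measurable]: "f \<in> borel_measurable borel"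
  shows "(\<integral>\<^sup>+x. f (x - m) \<partial>lborel) = (\<integral>\<^sup>+x. f x \<partial>lborel)"
proof -
  have "(\<integral>\<^sup>+x. f (x - m) \<partial>lborel) = (\<integral>\<^sup>+x. f (x - m) \<partial>(distr lborel borel ((+) m)))"
    by (simp add: lborel_distr_plus)
  also have "\<dots> = (\<integral>\<^sup>+x. f (m + x - m) \<partial>lborel)"
    by (subst nn_integral_distr) auto
  finally show ?thesis by simp
qed

lemma nd_exp_identity:
  assumes "\<sigma> > 0"
  shows "normal_density 0 \<sigma> x * exp (1/(4*\<sigma>\<^sup>2) * x\<^sup>2) = sqrt 2 * normal_density 0 (sqrt 2 * \<sigma>) x"
proof -
  have s2: "(sqrt 2 * \<sigma>)\<^sup>2 = 2*\<sigma>\<^sup>2" by (simp add: power_mult_distrib)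
  have sq: "sqrt (2*pi*(2*\<sigma>\<^sup>2)) = sqrt 2 * sqrt (2*pi*\<sigma>\<^sup>2)"
    by (simp add: real_sqrt_mult[symmetric] mult_ac)
  have ex: "- x\<^sup>2 / (2*\<sigma>\<^sup>2) + 1/(4*\<sigma>\<^sup>2) * x\<^sup>2 = - x\<^sup>2 / (2*(2*\<sigma>\<^sup>2))"
    using assms by (simp add: field_simps)
  have "normal_density 0 \<sigma> x * exp (1/(4*\<sigma>\<^sup>2) * x\<^sup>2)
      = 1 / sqrt (2*pi*\<sigma>\<^sup>2) * exp (- x\<^sup>2 / (2*(2*\<sigma>\<^sup>2)))"
  proof -
    have "exp (-(x - 0)\<^sup>2 / (2 * \<sigma>\<^sup>2)) * exp (1/(4*\<sigma>\<^sup>2) * x\<^sup>2) = exp (- x\<^sup>2 / (2*(2*\<sigma>\<^sup>2)))"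
      by (simp only: diff_zero exp_add[symmetric] ex)
    then show ?thesis unfolding normal_density_def by (simp only: mult.assoc)
  qed
  also have "\<dots> = sqrt 2 * normal_density 0 (sqrt 2 * \<sigma>) x"
    unfolding normal_density_def s2 sq using assms by simp
  finally show ?thesis .
qed

lemma gauss_coord:
  assumes "prob_space M" "centered_gaussian_vec M Y"
  shows "\<exists>t>0. \<exists>K\<ge>0. \<forall>t'. 0 < t' \<and> t' \<le> t \<longrightarrow>
           (\<integral>\<^sup>+\<omega>. ennreal (exp (t' * (Y \<omega> \<bullet> e)\<^sup>2)) \<partial>M) \<le> ennreal K"
proof -
  interpret prob_space M by fact
  have Ym[measurable]: "Y \<in> borel_measurable M"
    using assms(2) unfolding centered_gaussian_vec_def by blast
  have mono: "(\<integral>\<^sup>+\<omega>. ennreal (exp (t' * (Y \<omega> \<bullet> e)\<^sup>2)) \<partial>M)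
      \<le> (\<integral>\<^sup>+\<omega>. ennreal (exp (t * (Y \<omega> \<bullet> e)\<^sup>2)) \<partial>M)" if "t' \<le> t" for t t'
    using that by (intro nn_integral_mono ennreal_leI) (auto intro: mult_right_mono)
  from assms(2)[unfolded centered_gaussian_vec_def] have
    "(\<exists>\<sigma>>0. distributed M lborel (\<lambda>\<omega>. e \<bullet> Y \<omega>) (\<lambda>x. ennreal (normal_density 0 \<sigma> x)))
      \<or> (AE \<omega> in M. e \<bullet> Y \<omega> = 0)" by blast
  then show ?thesis
  proof
    assume "\<exists>\<sigma>>0. distributed M lborel (\<lambda>\<omega>. e \<bullet> Y \<omega>) (\<lambda>x. ennreal (normal_density 0 \<sigma> x))"
    then obtain \<sigma> where \<sigma>: "\<sigma> > 0"
      and D: "distributed M lborel (\<lambda>\<omega>. e \<bullet> Y \<omega>) (\<lambda>x. ennreal (normal_density 0 \<sigma> x))" by blast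
    define t where "t = 1/(4*\<sigma>\<^sup>2)"
    have tpos: "t > 0" using \<sigma> by (simp add: t_def)
    have "(\<integral>\<^sup>+\<omega>. ennreal (exp (t * (Y \<omega> \<bullet> e)\<^sup>2)) \<partial>M)
        = (\<integral>\<^sup>+x. ennreal (normal_density 0 \<sigma> x) * ennreal (exp (t * x\<^sup>2)) \<partial>lborel)"
      using distributed_nn_integral[OF D, of "\<lambda>x. ennreal (exp (t * x\<^sup>2))"] by (simp add: inner_commute)
    also have "\<dots> = (\<integral>\<^sup>+x. ennreal (sqrt 2) * ennreal (normal_density 0 (sqrt 2 * \<sigma>) x) \<partial>lborel)"
    proof (intro nn_integral_cong)
      fix x :: real
      show "ennreal (normal_density 0 \<sigma> x) * ennreal (exp (t * x\<^sup>2))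
          = ennreal (sqrt 2) * ennreal (normal_density 0 (sqrt 2 * \<sigma>) x)"
        using nd_exp_identity[OF \<sigma>, of x] unfolding t_def
        by (simp add: ennreal_mult[symmetric])
    qed
    also have "\<dots> = ennreal (sqrt 2)"
      by (subst nn_integral_cmult) (use \<sigma> in \<open>auto simp: nn_integral_normal_density\<close>)
    finally have "(\<integral>\<^sup>+\<omega>. ennreal (exp (t * (Y \<omega> \<bullet> e)\<^sup>2)) \<partial>M) = ennreal (sqrt 2)" .
    then have "\<forall>t'. 0 < t' \<and> t' \<le> t \<longrightarrow>
           (\<integral>\<^sup>+\<omega>. ennreal (exp (t' * (Y \<omega> \<bullet> e)\<^sup>2)) \<partial>M) \<le> ennreal (sqrt 2)"
      using mono by metis
    then show ?thesis using tpos by (intro exI[of _ t] conjI exI[of _ "sqrt 2"]) auto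
  next
    assume AE: "AE \<omega> in M. e \<bullet> Y \<omega> = 0"
    have "(\<integral>\<^sup>+\<omega>. ennreal (exp (t' * (Y \<omega> \<bullet> e)\<^sup>2)) \<partial>M) = 1" for t'
    proof -
      have "(\<integral>\<^sup>+\<omega>. ennreal (exp (t' * (Y \<omega> \<bullet> e)\<^sup>2)) \<partial>M) = (\<integral>\<^sup>+\<omega>. 1 \<partial>M)"
        by (intro nn_integral_cong_AE) (use AE in \<open>auto simp: inner_commute\<close>)
      then show ?thesis by (simp add: emeasure_space_1)
    qed
    then show ?thesis by (intro exI[of _ 1] conjI exI[of _ 1]) auto
  qed
qed

lemma x_part:
  fixes X :: "'s \<Rightarrow> 'a::euclidean_space" and pX :: "'a \<Rightarrow> real"
  assumes D: "distributed M lborel X (\<lambda>x. ennreal (pX x))"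
    and nn: "\<forall>x. 0 \<le> pX x" and c: "cX > 0" and C: "CX > 0"
    and bd: "\<forall>x. pX x \<le> CX * exp (- cX * (norm (x - mX))\<^sup>2)"
  shows "(\<integral>\<^sup>+\<omega>. ennreal (exp ((cX/2) * (norm (X \<omega> - mX))\<^sup>2)) \<partial>M) < \<top>"
proof -
  have "(\<integral>\<^sup>+\<omega>. ennreal (exp ((cX/2) * (norm (X \<omega> - mX))\<^sup>2)) \<partial>M)
      = (\<integral>\<^sup>+x. ennreal (pX x) * ennreal (exp ((cX/2) * (norm (x - mX))\<^sup>2)) \<partial>lborel)"
    using distributed_nn_integral[OF D, of "\<lambda>x. ennreal (exp ((cX/2) * (norm (x - mX))\<^sup>2))"] by simp
  also have "\<dots> \<le> (\<integral>\<^sup>+x. ennreal CX * ennreal (exp (- (cX/2 * (norm (x - mX))\<^sup>2))) \<partial>lborel)"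
  proof (intro nn_integral_mono)
    fix x
    have "pX x * exp ((cX/2) * (norm (x - mX))\<^sup>2)
        \<le> CX * exp (- cX * (norm (x - mX))\<^sup>2) * exp ((cX/2) * (norm (x - mX))\<^sup>2)"
      using bd by (intro mult_right_mono) auto
    also have "\<dots> = CX * exp (- (cX/2 * (norm (x - mX))\<^sup>2))"
      by (simp add: mult.assoc exp_add[symmetric])
    finally show "ennreal (pX x) * ennreal (exp ((cX/2) * (norm (x - mX))\<^sup>2))
        \<le> ennreal CX * ennreal (exp (- (cX/2 * (norm (x - mX))\<^sup>2)))"
      using nn C by (simp add: ennreal_mult[symmetric] ennreal_leI)
  qed
  also have "\<dots> = ennreal CX * (\<integral>\<^sup>+x. ennreal (exp (- (cX/2 * (norm (x - mX))\<^sup>2))) \<partial>lborel)"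
    by (subst nn_integral_cmult) auto
  also have "(\<integral>\<^sup>+x. ennreal (exp (- (cX/2 * (norm (x - mX))\<^sup>2))) \<partial>lborel)
      = (\<integral>\<^sup>+(x::'a). ennreal (exp (- (cX/2 * (norm x)\<^sup>2))) \<partial>lborel)"
    using nn_integral_lborel_shift[of "\<lambda>x. ennreal (exp (- (cX/2 * (norm x)\<^sup>2)))" mX] by simp
  also have "ennreal CX * \<dots> < \<top>"
    using gauss_multi[of "cX/2", where 'a='a] c by (simp add: ennreal_mult_less_top)
  finally show ?thesis .
qed

lemma nn_exp_shift:
  assumes [measurable]: "f \<in> borel_measurable M"
  shows "(\<integral>\<^sup>+\<omega>. ennreal (exp (t * (f \<omega> - r))) \<partial>M)
       = ennreal (exp (- t * r)) * (\<integral>\<^sup>+\<omega>. ennreal (exp (t * f \<omega>)) \<partial>M)"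
proof -
  have "(\<integral>\<^sup>+\<omega>. ennreal (exp (t * (f \<omega> - r))) \<partial>M)
      = (\<integral>\<^sup>+\<omega>. ennreal (exp (- t * r)) * ennreal (exp (t * f \<omega>)) \<partial>M)"
  proof (intro nn_integral_cong)
    fix \<omega>
    have "exp (t * (f \<omega> - r)) = exp (- t * r) * exp (t * f \<omega>)"
      by (simp add: exp_add[symmetric] algebra_simps)
    then show "ennreal (exp (t * (f \<omega> - r))) = ennreal (exp (- t * r)) * ennreal (exp (t * f \<omega>))"
      by (simp add: ennreal_mult[symmetric])
  qed
  also have "\<dots> = ennreal (exp (- t * r)) * (\<integral>\<^sup>+\<omega>. ennreal (exp (t * f \<omega>)) \<partial>M)"
    by (rule nn_integral_cmult) measurable
  finally show ?thesis .
qed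

lemma norm_sq_sum_basis: "(norm (y::'a::euclidean_space))\<^sup>2 = (\<Sum>e\<in>Basis. (y \<bullet> e)\<^sup>2)"
proof -
  have "(norm y)\<^sup>2 = y \<bullet> y" by (simp add: power2_norm_eq_inner)
  also have "\<dots> = (\<Sum>b\<in>Basis. (y \<bullet> b) * (y \<bullet> b))" by (rule euclidean_inner)
  finally show ?thesis by (simp add: power2_eq_square)
qed

lemma pointwise:
  fixes x y a m :: "'a::euclidean_space"
  assumes T: "T > 0" and s: "s > 0"
    and rho: "\<rho> = (norm (a - m) / 3)\<^sup>2"
  shows "exp (- (norm (x - y - a))\<^sup>2) \<le> (\<Sum>e\<in>Basis. exp (T * ((y \<bullet> e)\<^sup>2 - \<rho> / DIM('a))))
            + exp (s * ((norm (x - m))\<^sup>2 - \<rho>)) + exp (- \<rho>)"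
proof -
  let ?S = "\<Sum>e\<in>Basis. exp (T * ((y \<bullet> e)\<^sup>2 - \<rho> / DIM('a)))"
  have S0: "0 \<le> ?S" by (intro sum_nonneg) auto
  have L1: "exp (- (norm (x - y - a))\<^sup>2) \<le> 1" by simp
  have E0: "0 < exp (s * ((norm (x - m))\<^sup>2 - \<rho>))" "0 < exp (- \<rho>)" by auto
  consider "(norm y)\<^sup>2 \<ge> \<rho>" | "(norm (x-m))\<^sup>2 \<ge> \<rho>" | "(norm y)\<^sup>2 < \<rho>" "(norm (x-m))\<^sup>2 < \<rho>"
    by linarith
  then show ?thesis
  proof cases
    case 1
    have "\<exists>e\<in>Basis. (y \<bullet> e)\<^sup>2 \<ge> \<rho> / DIM('a)"
    proof (rule ccontr)
      assume "\<not> ?thesis"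
      then have "\<forall>e\<in>Basis. (y \<bullet> e)\<^sup>2 < \<rho> / DIM('a)" by auto
      then have "(\<Sum>e\<in>Basis. (y \<bullet> e)\<^sup>2) < (\<Sum>e\<in>(Basis::'a set). \<rho> / DIM('a))"
        by (intro sum_strict_mono) auto
      also have "\<dots> = \<rho>" by simp
      finally show False using 1 norm_sq_sum_basis[of y] by simp
    qed
    then obtain e where e: "e \<in> Basis" "(y \<bullet> e)\<^sup>2 \<ge> \<rho> / DIM('a)" by blast
    have "1 \<le> exp (T * ((y \<bullet> e)\<^sup>2 - \<rho> / DIM('a)))" using e T by simp
    also have "\<dots> \<le> ?S" by (rule member_le_sum) (use e in auto)
    finally show ?thesis using L1 E0 by linarith
  next
    case 2
    have "1 \<le> exp (s * ((norm (x - m))\<^sup>2 - \<rho>))" using 2 s by simp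
    then show ?thesis using L1 E0 S0 by linarith
  next
    case 3
    have r1: "norm y < norm (a - m) / 3"
      using 3(1) unfolding rho by (rule power_less_imp_less_base) simp
    have r2: "norm (x - m) < norm (a - m) / 3"
      using 3(2) unfolding rho by (rule power_less_imp_less_base) simp
    have "a - m = (x - m) - y - (x - y - a)" by (simp add: algebra_simps)
    then have "norm (a - m) = norm ((x - m) - y - (x - y - a))" by simp
    also have "\<dots> \<le> norm ((x - m) - y) + norm (x - y - a)" by (rule norm_triangle_ineq4)
    also have "\<dots> \<le> norm (x - m) + norm y + norm (x - y - a)"
      using norm_triangle_ineq4[of "x - m" y] by linarith
    finally have "norm (a - m) \<le> norm (x - m) + norm y + norm (x - y - a)" .
    then have "norm (a - m) / 3 \<le> norm (x - y - a)" using r1 r2 by linarith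
    then have "\<rho> \<le> (norm (x - y - a))\<^sup>2" unfolding rho by (rule power_mono) simp
    then have "exp (- (norm (x - y - a))\<^sup>2) \<le> exp (- \<rho>)" by simp
    then show ?thesis using S0 E0 by linarith
  qed
qed

theorem lemma5p1:
  fixes M :: "'s measure" and X Y :: "'s \<Rightarrow> 'a::euclidean_space"
    and pX :: "'a \<Rightarrow> real" and cX CX :: real and mX :: 'a
  assumes "prob_space M"
    and "centered_gaussian_vec M Y"
    and "distributed M lborel X (\<lambda>x. ennreal (pX x))"
    and "\<forall>x. 0 \<le> pX x"
    and "cX > 0" and "CX > 0"
    and "\<forall>x. pX x \<le> CX * exp (- cX * (norm (x - mX))\<^sup>2)"
  shows "\<exists>C>0. \<forall>a::'a.
           prob_space.expectation M (\<lambda>\<omega>. exp (- (norm (X \<omega> - Y \<omega> - a))\<^sup>2))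
             \<le> C * exp (- (cX / C) * (norm (a - mX))\<^sup>2)"
proof -
  interpret P: prob_space M by fact
  have Ym[measurable]: "Y \<in> borel_measurable M"
    using assms(2) unfolding centered_gaussian_vec_def by blast
  have Xm[measurable]: "X \<in> borel_measurable M"
    using distributed_measurable[OF assms(3)] by simp
  have "\<forall>e\<in>(Basis::'a set). \<exists>t>0. \<exists>K\<ge>0. \<forall>t'. 0 < t' \<and> t' \<le> t \<longrightarrow>
           (\<integral>\<^sup>+\<omega>. ennreal (exp (t' * (Y \<omega> \<bullet> e)\<^sup>2)) \<partial>M) \<le> ennreal K"
    using gauss_coord[OF assms(1,2)] by blast
  then obtain tt where "\<forall>e\<in>(Basis::'a set). tt e > 0 \<and> (\<exists>K\<ge>0. \<forall>t'. 0 < t' \<and> t' \<le> tt e \<longrightarrow>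
           (\<integral>\<^sup>+\<omega>. ennreal (exp (t' * (Y \<omega> \<bullet> e)\<^sup>2)) \<partial>M) \<le> ennreal K)"
    by metis
  then obtain KK where tt: "\<And>e. e \<in> Basis \<Longrightarrow> tt e > 0"
    and KK: "\<And>e. e \<in> Basis \<Longrightarrow> KK e \<ge> 0"
    and KKb: "\<And>e t'. e \<in> Basis \<Longrightarrow> 0 < t' \<Longrightarrow> t' \<le> tt e \<Longrightarrow>
           (\<integral>\<^sup>+\<omega>. ennreal (exp (t' * (Y \<omega> \<bullet> e)\<^sup>2)) \<partial>M) \<le> ennreal (KK e)"
    by metis
  define T where "T = Min (tt ` Basis)"
  have T: "T > 0" unfolding T_def using tt by (subst Min_gr_iff) auto
  have Tle: "T \<le> tt e" if "e \<in> Basis" for e unfolding T_def using that by (intro Min_le) auto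
  define n where "n = real DIM('a)"
  have n: "n > 0" unfolding n_def by simp
  define s where "s = cX / 2"
  have s: "s > 0" using assms(5) by (simp add: s_def)
  define IX where "IX = (\<integral>\<^sup>+\<omega>. ennreal (exp (s * (norm (X \<omega> - mX))\<^sup>2)) \<partial>M)"
  have IXf: "IX < \<top>" unfolding IX_def s_def by (rule x_part[OF assms(3,4,5,6,7)])
  define KX where "KX = enn2real IX"
  have KX: "KX \<ge> 0" and IXe: "IX = ennreal KX" using IXf by (auto simp: KX_def less_top)
  define c where "c = min (min (T / n) s) 1"
  have c: "c > 0" using T n s by (simp add: c_def)
  define K where "K = (\<Sum>e\<in>Basis. KK e) + KX + 1"
  have K: "K \<ge> 1" unfolding K_def using KK KX by (simp add: sum_nonneg)
  have main: "P.expectation (\<lambda>\<omega>. exp (- (norm (X \<omega> - Y \<omega> - a))\<^sup>2))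
      \<le> K * exp (- c * (norm (a - mX) / 3)\<^sup>2)" for a
  proof -
    define \<rho> where "\<rho> = (norm (a - mX) / 3)\<^sup>2"
    have \<rho>: "\<rho> \<ge> 0" by (simp add: \<rho>_def)
    define E where "E = exp (- c * \<rho>)"
    have E: "E > 0" by (simp add: E_def)
    let ?fy = "\<lambda>e \<omega>. ennreal (exp (T * ((Y \<omega> \<bullet> e)\<^sup>2 - \<rho> / DIM('a))))"
    let ?fx = "\<lambda>\<omega>. ennreal (exp (s * ((norm (X \<omega> - mX))\<^sup>2 - \<rho>)))"
    have "(\<integral>\<^sup>+\<omega>. ennreal (exp (- (norm (X \<omega> - Y \<omega> - a))\<^sup>2)) \<partial>M)
        \<le> (\<integral>\<^sup>+\<omega>. ((\<Sum>e\<in>Basis. ?fy e \<omega>) + ?fx \<omega>) + ennreal (exp (- \<rho>)) \<partial>M)"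
    proof (intro nn_integral_mono)
      fix \<omega>
      have "ennreal (exp (- (norm (X \<omega> - Y \<omega> - a))\<^sup>2)) \<le>
          ennreal ((\<Sum>e\<in>Basis. exp (T * ((Y \<omega> \<bullet> e)\<^sup>2 - \<rho> / DIM('a))))
            + exp (s * ((norm (X \<omega> - mX))\<^sup>2 - \<rho>)) + exp (- \<rho>))"
        by (rule ennreal_leI, rule pointwise[OF T s \<rho>_def])
      also have "\<dots> = ((\<Sum>e\<in>Basis. ?fy e \<omega>) + ?fx \<omega>) + ennreal (exp (- \<rho>))"
        by (simp add: ennreal_plus sum_nonneg)
      finally show "ennreal (exp (- (norm (X \<omega> - Y \<omega> - a))\<^sup>2)) \<le> ((\<Sum>e\<in>Basis. ?fy e \<omega>) + ?fx \<omega>) + ennreal (exp (- \<rho>))" .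
    qed
    also have "\<dots> = ((\<Sum>e\<in>Basis. (\<integral>\<^sup>+\<omega>. ?fy e \<omega> \<partial>M)) + (\<integral>\<^sup>+\<omega>. ?fx \<omega> \<partial>M)) + ennreal (exp (- \<rho>))"
    proof -
      have "(\<integral>\<^sup>+\<omega>. ((\<Sum>e\<in>Basis. ?fy e \<omega>) + ?fx \<omega>) + ennreal (exp (- \<rho>)) \<partial>M)
          = (\<integral>\<^sup>+\<omega>. ((\<Sum>e\<in>Basis. ?fy e \<omega>) + ?fx \<omega>) \<partial>M) + (\<integral>\<^sup>+\<omega>. ennreal (exp (- \<rho>)) \<partial>M)"
        by (rule nn_integral_add; measurable)
      also have "(\<integral>\<^sup>+\<omega>. ((\<Sum>e\<in>Basis. ?fy e \<omega>) + ?fx \<omega>) \<partial>M)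
          = (\<integral>\<^sup>+\<omega>. (\<Sum>e\<in>Basis. ?fy e \<omega>) \<partial>M) + (\<integral>\<^sup>+\<omega>. ?fx \<omega> \<partial>M)"
        by (rule nn_integral_add; measurable)
      also have "(\<integral>\<^sup>+\<omega>. (\<Sum>e\<in>Basis. ?fy e \<omega>) \<partial>M) = (\<Sum>e\<in>Basis. (\<integral>\<^sup>+\<omega>. ?fy e \<omega> \<partial>M))"
        by (rule nn_integral_sum) measurable
      also have "(\<integral>\<^sup>+\<omega>. ennreal (exp (- \<rho>)) \<partial>M) = ennreal (exp (- \<rho>))"
        by (simp add: P.emeasure_space_1)
      finally show ?thesis .
    qed
    also have "\<dots> \<le> ((\<Sum>e\<in>Basis. ennreal (KK e * E)) + ennreal (KX * E)) + ennreal E"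
    proof (intro add_mono sum_mono)
      fix e :: 'a assume e: "e \<in> Basis"
      have "(\<integral>\<^sup>+\<omega>. ?fy e \<omega> \<partial>M) = ennreal (exp (- T * (\<rho> / DIM('a)))) * (\<integral>\<^sup>+\<omega>. ennreal (exp (T * (Y \<omega> \<bullet> e)\<^sup>2)) \<partial>M)"
        by (rule nn_exp_shift) measurable
      also have "\<dots> \<le> ennreal (exp (- T * (\<rho> / DIM('a)))) * ennreal (KK e)"
        by (intro mult_left_mono KKb e T Tle) auto
      also have "\<dots> \<le> ennreal (KK e * E)"
      proof -
        have "c * \<rho> \<le> T * (\<rho> / DIM('a))"
        proof -
          have "c \<le> T / n" by (simp add: c_def)
          then have "c * \<rho> \<le> T / n * \<rho>" using \<rho> by (rule mult_right_mono)
          then show ?thesis by (simp add: n_def)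
        qed
        then have "exp (- T * (\<rho> / DIM('a))) \<le> E" by (simp add: E_def)
        then have h: "exp (- T * (\<rho> / DIM('a))) * KK e \<le> KK e * E"
          using KK[OF e] by (metis mult.commute mult_left_mono)
        have "ennreal (exp (- T * (\<rho> / DIM('a)))) * ennreal (KK e) = ennreal (exp (- T * (\<rho> / DIM('a))) * KK e)"
          using KK[OF e] by (intro ennreal_mult[symmetric]) auto
        also have "\<dots> \<le> ennreal (KK e * E)" by (rule ennreal_leI[OF h])
        finally show ?thesis .
      qed
      finally show "(\<integral>\<^sup>+\<omega>. ?fy e \<omega> \<partial>M) \<le> ennreal (KK e * E)" .
    next
      have "(\<integral>\<^sup>+\<omega>. ?fx \<omega> \<partial>M) = ennreal (exp (- s * \<rho>)) * IX"
        unfolding IX_def by (rule nn_exp_shift) measurable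
      also have "\<dots> \<le> ennreal (KX * E)"
      proof -
        have "c * \<rho> \<le> s * \<rho>" using \<rho> by (intro mult_right_mono) (auto simp: c_def)
        then have "exp (- s * \<rho>) \<le> E" by (simp add: E_def)
        then have h: "exp (- s * \<rho>) * KX \<le> KX * E"
          using KX by (metis mult.commute mult_left_mono)
        have "ennreal (exp (- s * \<rho>)) * ennreal KX = ennreal (exp (- s * \<rho>) * KX)"
          using KX by (intro ennreal_mult[symmetric]) auto
        also have "\<dots> \<le> ennreal (KX * E)" by (rule ennreal_leI[OF h])
        finally show ?thesis unfolding IXe .
      qed
      finally show "(\<integral>\<^sup>+\<omega>. ?fx \<omega> \<partial>M) \<le> ennreal (KX * E)" .
    next
      have "c * \<rho> \<le> 1 * \<rho>" using \<rho> by (intro mult_right_mono) (auto simp: c_def)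
      then show "ennreal (exp (- \<rho>)) \<le> ennreal E" by (intro ennreal_leI) (simp add: E_def)
    qed
    also have "\<dots> = ennreal (K * E)"
      using KK KX E by (simp add: K_def ennreal_plus sum_nonneg sum_distrib_right[symmetric] distrib_right)
    finally have "(\<integral>\<^sup>+\<omega>. ennreal (exp (- (norm (X \<omega> - Y \<omega> - a))\<^sup>2)) \<partial>M) \<le> ennreal (K * E)" .
    then have "P.expectation (\<lambda>\<omega>. exp (- (norm (X \<omega> - Y \<omega> - a))\<^sup>2)) \<le> K * E"
      using K E by (intro integral_real_bounded) auto
    then show ?thesis by (simp add: E_def \<rho>_def)
  qed
  define C where "C = max K (9 * cX / c)"
  have C: "C > 0" "K \<le> C" "9 * cX / c \<le> C" using K by (auto simp: C_def)
  show ?thesis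
  proof (intro exI[of _ C] conjI allI)
    show "C > 0" by fact
    fix a :: 'a
    have "cX / C \<le> c / 9"
    proof -
      have "cX / C \<le> cX / (9 * cX / c)"
        using C assms(5) c by (intro divide_left_mono) auto
      also have "\<dots> = c / 9" using assms(5) c by (simp add: field_simps)
      finally show ?thesis .
    qed
    then have "cX / C * (norm (a - mX))\<^sup>2 \<le> c / 9 * (norm (a - mX))\<^sup>2"
      by (intro mult_right_mono) auto
    then have "exp (- c * (norm (a - mX) / 3)\<^sup>2) \<le> exp (- (cX / C) * (norm (a - mX))\<^sup>2)"
      by (simp add: power_divide)
    then have "K * exp (- c * (norm (a - mX) / 3)\<^sup>2) \<le> C * exp (- (cX / C) * (norm (a - mX))\<^sup>2)"
      using C K by (intro mult_mono) auto
    then show "P.expectation (\<lambda>\<omega>. exp (- (norm (X \<omega> - Y \<omega> - a))\<^sup>2))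
             \<le> C * exp (- (cX / C) * (norm (a - mX))\<^sup>2)"
      using main[of a] by linarith
  qed
qed

end
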